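(* Let $A$ be a finite-dimensional real algebra with identity $e$ in which every subalgebra generated by a single element is associative, and let $(p^{[n]}(t))_{n\in\mathbb N}$, $p^{[n]}(t)=\sum_{k=0}^\infty a_k^{[n]}t^k$, be any sequence of real power series with $\sum_{k}|a_k^{[n]}|<\infty$ for each $n$ and $\lim_{n\to\infty}\sup\{|a_k^{[n]}|:k\ge1\}=0$. If $x\in A$ and $\lim_{n\to\infty}x^n=x_0$, then $\lim_{n\to\infty}p^{[n]}(x)$ exists if and only if $\lim_{n\to\infty}\big[a_0^{[n]}e+(p^{[n]}(1)-a_0^{[n]})x_0\big]$ exists, and in that case $$\lim_{n\to\infty}p^{[n]}(x)=\lim_{n\to\infty}\big[a_0^{[n]}e+(p^{[n]}(1)-a_0^{[n]})x_0\big].$$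
   Context: $A$ carries the Euclidean topology; $p^{[n]}(x)=a_0^{[n]}e+\sum_{k\ge1}a_k^{[n]}x^k$ and $p^{[n]}(1)=\sum_{k\ge0}a_k^{[n]}$. The sequence $(p^{[n]})$ is arbitrary (not necessarily iterates). *)

theory Defs
  imports "HOL-Analysis.Analysis"
begin

text \<open>A (possibly non-associative) finite-dimensional real algebra is modelled by a
finite-dimensional real vector space (type class euclidean_space, carrying the Euclidean
topology) together with a bilinear multiplication muland an identity e.\<close>

definition is_subalgebra :: "('a::real_vector \<Rightarrow> 'a \<Rightarrow> 'a) \<Rightarrow> 'a set \<Rightarrow> bool" where
  "is_subalgebra mul S \<longleftrightarrow> subspace S \<and> (\<forall>u\<in>S. \<forall>v\<in>S. mul u v \<in> S)"

definition gen_subalgebra :: "('a::real_vector \<Rightarrow> 'a \<Rightarrow> 'a) \<Rightarrow> 'a \<Rightarrow> 'a set" where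
  "gen_subalgebra mul y = \<Inter>{S. is_subalgebra mul S \<and> y \<in> S}"

definition assoc_on :: "('a \<Rightarrow> 'a \<Rightarrow> 'a) \<Rightarrow> 'a set \<Rightarrow> bool" where
  "assoc_on mul S \<longleftrightarrow> (\<forall>u\<in>S. \<forall>v\<in>S. \<forall>w\<in>S. mul (mul u v) w = mul u (mul v w))"

text \<open>Powers: x^0 = e, x^(n+1) = x x^n (well defined by power-associativity).\<close>
fun apow :: "('a \<Rightarrow> 'a \<Rightarrow> 'a) \<Rightarrow> 'a \<Rightarrow> 'a \<Rightarrow> nat \<Rightarrow> 'a" where
  "apow mul e x 0 = e"
| "apow mul e x (Suc n) = mul x (apow mul e x n)"

definition pseries_eval :: "('a::real_normed_vector \<Rightarrow> 'a \<Rightarrow> 'a) \<Rightarrow> 'a \<Rightarrow> (nat \<Rightarrow> real) \<Rightarrow> 'a \<Rightarrow> 'a" where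
  "pseries_eval mul e c x = c 0 *\<^sub>R e + (\<Sum>k. c (Suc k) *\<^sub>R apow mul e x (Suc k))"

end

theory Submission
  imports Defs
begin

lemma geo_summable:
  fixes mul :: "'a::real_normed_vector \<Rightarrow> 'a \<Rightarrow> 'a" and d :: "nat \<Rightarrow> 'a"
  assumes bb: "bounded_bilinear mul"
    and dlim: "d \<longlonglongrightarrow> 0"
    and dmul: "\<And>m j. d (m + j) = mul (d m) (d j)"
  shows "summable (\<lambda>k. norm (d k))"
proof -
  obtain K where K: "K > 0" "\<And>u v. norm (mul u v) \<le> norm u * norm v * K"
    using bounded_bilinear.pos_bounded[OF bb] by blast
  have "(\<lambda>k. norm (d k) * K) \<longlonglongrightarrow> 0 * K"
    by (intro tendsto_intros) (use dlim tendsto_norm_zero in auto)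
  then have "eventually (\<lambda>k. norm (d k) * K < 1/2) sequentially"
    by (intro order_tendstoD) auto
  moreover have "eventually (\<lambda>k. k \<ge> 1) sequentially" by (rule eventually_ge_at_top)
  ultimately have "eventually (\<lambda>k. k \<ge> 1 \<and> norm (d k) * K \<le> 1/2) sequentially"
    by eventually_elim auto
  then obtain N where N: "\<And>k. k \<ge> N \<Longrightarrow> k \<ge> 1 \<and> norm (d k) * K \<le> 1/2"
    unfolding eventually_sequentially by blast
  obtain m where m: "m \<ge> 1" "norm (d m) * K \<le> 1/2" using N[of N] by blast
  have geo: "norm (d (q*m + r)) \<le> (1/2)^q * norm (d r)" for q r
  proof (induction q)
    case 0 then show ?case by simp
  next
    case (Suc q)
    have "d (Suc q * m + r) = mul (d m) (d (q*m + r))"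
      using dmul[of m "q*m+r"] by (simp add: add.assoc)
    then have "norm (d (Suc q * m + r)) \<le> norm (d m) * norm (d (q*m + r)) * K"
      using K(2) by simp
    also have "\<dots> = (norm (d m) * K) * norm (d (q*m + r))" by simp
    also have "\<dots> \<le> (1/2) * ((1/2)^q * norm (d r))"
      using m(2) Suc.IH by (intro mult_mono) auto
    finally show ?case by simp
  qed
  define C where "C = Max ((\<lambda>r. norm (d r)) ` {..<m})"
  have C: "norm (d r) \<le> C" if "r < m" for r
    unfolding C_def using that by (intro Max_ge) auto
  define \<rho> :: real where "\<rho> = 2 powr (- 1 / real m)"
  have rho: "0 < \<rho>" "\<rho> < 1" unfolding \<rho>_def using m(1) by (auto intro: powr_less_one)
  have bound: "norm (d k) \<le> 2 * C * \<rho> ^ k" for k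
  proof -
    have half: "(1/2::real)^(k div m) \<le> 2 * \<rho> ^ k"
    proof -
      have "real k < (real (k div m) + 1) * real m"
      proof -
        have "k < (k div m + 1) * m" using m(1)
          by (metis add.commute div_mult_mod_eq mod_less_divisor mult_Suc nat_add_left_cancel_less
              plus_1_eq_Suc le_less_trans le_refl less_le_trans zero_less_one)
        then show ?thesis by (metis of_nat_1 of_nat_add of_nat_less_iff of_nat_mult)
      qed
      then have le: "- real (k div m) \<le> 1 + (-1 / real m) * real k"
        using m(1) by (simp add: field_simps)
      have "(1/2::real)^(k div m) = 2 powr (- real (k div m))"
        by (simp add: powr_minus_divide powr_realpow power_one_over)
      also have "\<dots> \<le> 2 powr (1 + (-1 / real m) * real k)"
        using le by (intro powr_mono) auto
      also have "\<dots> = 2 * \<rho> ^ k"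
      proof -
        have "\<rho> ^ k = \<rho> powr (real k)" using rho by (simp add: powr_realpow)
        also have "\<dots> = 2 powr ((-1 / real m) * real k)" unfolding \<rho>_def by (simp add: powr_powr)
        moreover have "2 powr (1 + (-1 / real m) * real k) = 2 powr 1 * 2 powr ((-1 / real m) * real k)"
          by (rule powr_add)
        ultimately show ?thesis by simp
      qed
      finally show ?thesis .
    qed
    have k: "k = (k div m) * m + k mod m" by simp
    have "norm (d k) \<le> (1/2)^(k div m) * norm (d (k mod m))"
      using geo[of "k div m" "k mod m"] k by simp
    also have "\<dots> \<le> (1/2)^(k div m) * C"
      using C[of "k mod m"] m(1) by (intro mult_left_mono) auto
    also have "\<dots> \<le> 2 * \<rho> ^ k * C"
    proof -
      have "0 \<le> C" using order_trans[OF norm_ge_zero C[of 0]] m(1) by simp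
      then show ?thesis using half by (intro mult_right_mono) auto
    qed
    finally show ?thesis by (simp add: ac_simps)
  qed
  show ?thesis
    by (rule summable_comparison_test'[where g="\<lambda>k. 2 * C * \<rho> ^ k" and N=0])
       (use rho bound in \<open>auto intro!: summable_mult summable_geometric\<close>)
qed


lemma apow_mem_sub:
  assumes "\<And>y. mul e y = y \<and> mul y e = y" "is_subalgebra mul S" "x \<in> S"
  shows "apow mul e x (Suc k) \<in> S"
proof (induction k)
  case 0
  then show ?case using assms by (auto simp: is_subalgebra_def)
next
  case (Suc k)
  then show ?case using assms unfolding is_subalgebra_def apow.simps(2)[of mul e x "Suc k"] by blast
qed

lemma apow_mem:
  assumes "\<And>y. mul e y = y \<and> mul y e = y"
  shows "apow mul e x (Suc k) \<in> gen_subalgebra mul x"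
  unfolding gen_subalgebra_def using apow_mem_sub[OF assms] by blast

lemma apow_add:
  assumes unit: "\<And>y. mul e y = y \<and> mul y e = y"
    and pa: "assoc_on mul (gen_subalgebra mul x)"
  shows "apow mul e x (m + j) = mul (apow mul e x m) (apow mul e x j)"
proof (induction m)
  case 0 then show ?case using unit by simp
next
  case (Suc m)
  show ?case
  proof (cases "m = 0 \<or> j = 0")
    case True
    then show ?thesis using unit by auto
  next
    case False
    then obtain m' j' where mj: "m = Suc m'" "j = Suc j'" by (metis not0_implies_Suc)
    have "apow mul e x (Suc m + j) = mul x (mul (apow mul e x m) (apow mul e x j))"
      using Suc by simp
    also have "\<dots> = mul (mul x (apow mul e x m)) (apow mul e x j)"
      using pa apow_mem[OF unit, of x 0] apow_mem[OF unit, of x m'] apow_mem[OF unit, of x j'] mj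
      unfolding assoc_on_def by (metis apow.simps unit)
    finally show ?thesis by simp
  qed
qed

theorem lemma2:
  fixes mul :: "'a::euclidean_space \<Rightarrow> 'a \<Rightarrow> 'a"
    and e x x0 :: 'a
    and a :: "nat \<Rightarrow> nat \<Rightarrow> real"
  assumes bil: "bilinear mul"
    and unit: "\<And>y. mul e y = y \<and> mul y e = y"
    and pow_assoc: "\<And>y. assoc_on mul (gen_subalgebra mul y)"
    and abs_summable: "\<And>n. summable (\<lambda>k. \<bar>a n k\<bar>)"
    and sup_lim: "(\<lambda>n. SUP k\<in>{1..}. \<bar>a n k\<bar>) \<longlonglongrightarrow> 0"
    and xlim: "(\<lambda>n. apow mul e x n) \<longlonglongrightarrow> x0"
  shows "(convergent (\<lambda>n. pseries_eval mul e (a n) x)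
           \<longleftrightarrow> convergent (\<lambda>n. a n 0 *\<^sub>R e + (suminf (a n) - a n 0) *\<^sub>R x0))
         \<and> (convergent (\<lambda>n. a n 0 *\<^sub>R e + (suminf (a n) - a n 0) *\<^sub>R x0) \<longrightarrow>
           lim (\<lambda>n. pseries_eval mul e (a n) x)
           = lim (\<lambda>n. a n 0 *\<^sub>R e + (suminf (a n) - a n 0) *\<^sub>R x0))"
proof -
  define P where "P n = pseries_eval mul e (a n) x" for n
  define Q where "Q n = a n 0 *\<^sub>R e + (suminf (a n) - a n 0) *\<^sub>R x0" for n
  define d where "d k = apow mul e x k - x0" for k
  define s where "s n = (SUP k\<in>{1..}. \<bar>a n k\<bar>)" for n
  have bb: "bounded_bilinear mul" using bil bilinear_conv_bounded_bilinear by blast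
  note pw = apow_add[OF unit pow_assoc]
  have shift: "(\<lambda>n. apow mul e x (n + k)) \<longlonglongrightarrow> x0" for k
    using LIMSEQ_ignore_initial_segment[OF xlim] .
  have L1: "mul (apow mul e x m) x0 = x0" for m
  proof -
    have "(\<lambda>n. mul (apow mul e x m) (apow mul e x n)) \<longlonglongrightarrow> mul (apow mul e x m) x0"
      by (rule bounded_bilinear.tendsto[OF bb]) (auto intro: xlim)
    moreover have "(\<lambda>n. mul (apow mul e x m) (apow mul e x n)) = (\<lambda>n. apow mul e x (n + m))"
      by (rule ext) (metis pw add.commute)
    ultimately show ?thesis using shift LIMSEQ_unique by metis
  qed
  have L2: "mul x0 (apow mul e x j) = x0" for j
  proof -
    have "(\<lambda>n. mul (apow mul e x n) (apow mul e x j)) \<longlonglongrightarrow> mul x0 (apow mul e x j)"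
      by (rule bounded_bilinear.tendsto[OF bb]) (auto intro: xlim)
    moreover have "(\<lambda>n. mul (apow mul e x n) (apow mul e x j)) = (\<lambda>n. apow mul e x (n + j))"
      by (rule ext) (metis pw)
    ultimately show ?thesis using shift LIMSEQ_unique by metis
  qed
  have L3: "mul x0 x0 = x0"
  proof -
    have "(\<lambda>n. mul x0 (apow mul e x n)) \<longlonglongrightarrow> mul x0 x0"
      by (rule bounded_bilinear.tendsto[OF bb]) (auto intro: xlim)
    then show ?thesis using L2 by (simp add: LIMSEQ_const_iff)
  qed
  have dmul: "d (m + j) = mul (d m) (d j)" for m j
    unfolding d_def
    by (simp add: bounded_bilinear.diff_left[OF bb] bounded_bilinear.diff_right[OF bb] L1 L2 L3 pw)
  have dlim: "d \<longlonglongrightarrow> 0"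
    unfolding d_def using tendsto_diff[OF xlim tendsto_const[of x0]] by simp
  have dsum: "summable (\<lambda>k. norm (d k))"
    by (rule geo_summable[OF bb dlim dmul])
  then have dsum1: "summable (\<lambda>k. norm (d (Suc k)))"
    using summable_ignore_initial_segment[of _ 1] by fastforce
  define S where "S = (\<Sum>k. norm (d (Suc k)))"
  have S0: "S \<ge> 0" unfolding S_def by (intro suminf_nonneg dsum1) auto
  obtain M where M: "M > 0" "\<And>k. norm (apow mul e x k) \<le> M"
    using convergent_imp_Bseq[of "apow mul e x"] xlim by (auto simp: Bseq_def convergent_def)
  have asum: "summable (a n)" for n using abs_summable summable_rabs_cancel by blast
  have asum1: "summable (\<lambda>k. a n (Suc k))" for n
    using asum summable_ignore_initial_segment[of _ 1] by fastforce
  have aabs1: "summable (\<lambda>k. \<bar>a n (Suc k)\<bar>)" for n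
    using abs_summable summable_ignore_initial_segment[of _ 1] by fastforce
  have le_s: "\<bar>a n k\<bar> \<le> s n" if "k \<ge> 1" for n k
  proof -
    have "bdd_above ((\<lambda>k. \<bar>a n k\<bar>) ` {1..})"
    proof (rule bdd_aboveI2)
      fix k show "\<bar>a n k\<bar> \<le> (\<Sum>k. \<bar>a n k\<bar>)"
        using sum_le_suminf[OF abs_summable[of n], of "{k}"] by simp
    qed
    then show ?thesis unfolding s_def using that by (intro cSUP_upper) auto
  qed
  have diff: "norm (P n - Q n) \<le> s n * S" for n
  proof -
    have t1: "summable (\<lambda>k. a n (Suc k) *\<^sub>R apow mul e x (Suc k))"
      by (rule summable_comparison_test'[where g="\<lambda>k. \<bar>a n (Suc k)\<bar> * M" and N=0])
         (use aabs1 M in \<open>auto intro!: summable_mult2 mult_left_mono simp del: apow.simps\<close>)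
    have t2: "summable (\<lambda>k. a n (Suc k) *\<^sub>R x0)"
      using asum1 by (intro summable_scaleR_left)
    have "suminf (a n) - a n 0 = (\<Sum>k. a n (Suc k))" using suminf_split_head[OF asum] by simp
    then have "(suminf (a n) - a n 0) *\<^sub>R x0 = (\<Sum>k. a n (Suc k) *\<^sub>R x0)"
      using suminf_scaleR_left[OF asum1] by simp
    then have "P n - Q n = (\<Sum>k. a n (Suc k) *\<^sub>R apow mul e x (Suc k)) - (\<Sum>k. a n (Suc k) *\<^sub>R x0)"
      unfolding P_def Q_def pseries_eval_def by simp
    also have "\<dots> = (\<Sum>k. a n (Suc k) *\<^sub>R d (Suc k))"
      unfolding d_def using suminf_diff[OF t1 t2] by (simp add: scaleR_diff_right)
    finally have eq: "P n - Q n = (\<Sum>k. a n (Suc k) *\<^sub>R d (Suc k))" .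
    have bnd: "norm (a n (Suc k) *\<^sub>R d (Suc k)) \<le> s n * norm (d (Suc k))" for k
      using le_s[of "Suc k" n] by (simp add: mult_right_mono)
    have sm: "summable (\<lambda>k. s n * norm (d (Suc k)))" using dsum1 by (rule summable_mult)
    have sn: "summable (\<lambda>k. norm (a n (Suc k) *\<^sub>R d (Suc k)))"
      by (rule summable_comparison_test'[OF sm, where N=0]) (use bnd in auto)
    have "norm (P n - Q n) \<le> (\<Sum>k. norm (a n (Suc k) *\<^sub>R d (Suc k)))"
      unfolding eq by (rule summable_norm[OF sn])
    also have "\<dots> \<le> (\<Sum>k. s n * norm (d (Suc k)))"
      by (rule suminf_le[OF bnd sn sm])
    also have "\<dots> = s n * S" unfolding S_def using suminf_mult[OF dsum1] by simp
    finally show ?thesis .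
  qed
  have sS: "(\<lambda>n. s n * S) \<longlonglongrightarrow> 0 * S"
    using sup_lim unfolding s_def by (intro tendsto_intros)
  have PQ: "(\<lambda>n. P n - Q n) \<longlonglongrightarrow> 0"
    by (rule Lim_null_comparison[where g="\<lambda>n. s n * S"]) (use diff sS in auto)
  have conv: "convergent P \<longleftrightarrow> convergent Q"
  proof
    assume "convergent P"
    then obtain L where "P \<longlonglongrightarrow> L" by (auto simp: convergent_def)
    then have "(\<lambda>n. P n - (P n - Q n)) \<longlonglongrightarrow> L - 0" by (intro tendsto_intros PQ)
    then show "convergent Q" by (auto simp: convergent_def)
  next
    assume "convergent Q"
    then obtain L where "Q \<longlonglongrightarrow> L" by (auto simp: convergent_def)
    then have "(\<lambda>n. Q n + (P n - Q n)) \<longlonglongrightarrow> L + 0" by (intro tendsto_intros PQ)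
    then show "convergent P" by (auto simp: convergent_def)
  qed
  have limeq: "lim P = lim Q" if "convergent Q"
  proof -
    obtain L where L: "Q \<longlonglongrightarrow> L" using \<open>convergent Q\<close> unfolding convergent_def by blast
    then have "(\<lambda>n. Q n + (P n - Q n)) \<longlonglongrightarrow> L + 0" by (intro tendsto_intros PQ)
    then have "P \<longlonglongrightarrow> L" by simp
    then show ?thesis using L by (simp add: limI)
  qed
  show ?thesis
    using conv limeq unfolding P_def[abs_def] Q_def[abs_def] by blast
qed

end
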